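(* Let $A_1,\dots,A_m\in\mathbb{S}^n$, $b\in\mathbb{R}^m$, and let $p$ be such that $\frac{p(p+1)}{2}>\operatorname{rank}\mathcal{A}$ and Assumption 1 holds for $p$. Then for almost every $C\in\mathbb{S}^n$ (all $C$ outside a Lebesgue-null set), every critical point $Y\in\mathcal{M}_p$ of (P) satisfies $\operatorname{rank}(Y)<p$.
   Context: $\mathbb{S}^n$: real symmetric $n\times n$ matrices; $\langle U,V\rangle=\operatorname{tr}(U^\top V)$. $\mathcal{A}:\mathbb{S}^n\to\mathbb{R}^m$, $\mathcal{A}(X)_i=\langle A_i,X\rangle$, adjoint $\mathcal{A}^*(\nu)=\sum_i\nu_iA_i$; $\operatorname{rank}\mathcal{A}$ is the rank of this linear map. $\mathcal{M}_p=\{Y\in\mathbb{R}^{n\times p}:\mathcal{A}(YY^\top)=b\}$; (P): minimize $\langle CY,Y\rangle$ over $\mathcal{M}_p$. Assumption 1 (for $p$ with $\mathcal{M}_p\ne\emptyset$): either (a) $A_1Y,\dots,A_mY$ are linearly independent for all $Y\in\mathcal{M}_p$, or (b) $\operatorname{span}\{A_1Y,\dots,A_mY\}$ has constant dimension on an open neighborhood of $\mathcal{M}_p$ in $\mathbb{R}^{n\times p}$. For $Y\in\mathcal{M}_p$: $G_{ij}=\langle A_iY,A_jY\rangle$, $\mu=G^\dagger\mathcal{A}(CYY^\top)$, $S(Y)=C-\mathcal{A}^*(\mu)$. $Y$ is a critical point of (P) if $S(Y)Y=0$. *)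

theory Defs
  imports "HOL-Analysis.Analysis"
begin

definition frob :: "real^'p^'n \<Rightarrow> real^'p^'n \<Rightarrow> real" where
  "frob U V = trace (transpose U ** V)"

definition symmat :: "(real^'n^'n) set" where
  "symmat = {X. transpose X = X}"

definition Aop :: "('m::finite \<Rightarrow> real^'n^'n) \<Rightarrow> real^'n^'n \<Rightarrow> real^'m" where
  "Aop A X = (\<chi> i. frob (A i) X)"

definition Aadj :: "('m::finite \<Rightarrow> real^'n^'n) \<Rightarrow> real^'m \<Rightarrow> real^'n^'n" where
  "Aadj A \<nu> = (\<Sum>i\<in>UNIV. (\<nu> $ i) *\<^sub>R A i)"

definition rankA :: "('m::finite \<Rightarrow> real^'n^'n) \<Rightarrow> nat" where
  "rankA A = dim (Aop A ` symmat)"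

definition Mset :: "('m::finite \<Rightarrow> real^'n^'n) \<Rightarrow> real^'m \<Rightarrow> (real^'p^'n) set" where
  "Mset A b = {Y. Aop A (Y ** transpose Y) = b}"

definition pinv :: "real^'k^'k \<Rightarrow> real^'k^'k" where
  "pinv G = (THE H. G ** H ** G = G \<and> H ** G ** H = H \<and>
                    transpose (G ** H) = G ** H \<and> transpose (H ** G) = H ** G)"

(* Assumption 1 for p (p = CARD('p), encoded by the type of Y) *)
definition assumption1 :: "('m::finite \<Rightarrow> real^'n^'n) \<Rightarrow> real^'m \<Rightarrow> ('p::finite) itself \<Rightarrow> bool" where
  "assumption1 A b _ \<longleftrightarrow>
     ((Mset A b :: (real^'p^'n) set) \<noteq> {} \<longrightarrow>
       ((\<forall>Y\<in>(Mset A b :: (real^'p^'n) set).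
           \<forall>c::real^'m. (\<Sum>i\<in>UNIV. (c $ i) *\<^sub>R (A i ** Y)) = 0 \<longrightarrow> c = 0)
        \<or> (\<exists>U::(real^'p^'n) set. open U \<and> Mset A b \<subseteq> U \<and>
              (\<exists>k. \<forall>Y\<in>U. dim (span ((\<lambda>i. A i ** Y) ` UNIV)) = k))))"

definition Gram :: "('m::finite \<Rightarrow> real^'n^'n) \<Rightarrow> real^'p^'n \<Rightarrow> real^'m^'m" where
  "Gram A Y = (\<chi> i j. frob (A i ** Y) (A j ** Y))"

definition mu :: "('m::finite \<Rightarrow> real^'n^'n) \<Rightarrow> real^'n^'n \<Rightarrow> real^'p^'n \<Rightarrow> real^'m" where
  "mu A C Y = pinv (Gram A Y) *v Aop A (C ** Y ** transpose Y)"

definition Smat :: "('m::finite \<Rightarrow> real^'n^'n) \<Rightarrow> real^'n^'n \<Rightarrow> real^'p^'n \<Rightarrow> real^'n^'n" where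
  "Smat A C Y = C - Aadj A (mu A C Y)"

definition critical :: "('m::finite \<Rightarrow> real^'n^'n) \<Rightarrow> real^'m \<Rightarrow> real^'n^'n \<Rightarrow> real^'p^'n \<Rightarrow> bool" where
  "critical A b C Y \<longleftrightarrow> Y \<in> Mset A b \<and> Smat A C Y ** Y = 0"

(* Lebesgue-null subset of S^n: S^n is identified with Euclidean space through the
   linear surjection X |-> (X + X^T)/2 from R^{n x n}; a set N of symmetric matrices
   is null iff its preimage is a Lebesgue null set in R^{n x n}. *)
definition sym_null :: "(real^'n^'n) set \<Rightarrow> bool" where
  "sym_null N \<longleftrightarrow> N \<subseteq> symmat \<and>
     {X::real^'n^'n. (1/2) *\<^sub>R (X + transpose X) \<in> N} \<in> null_sets lebesgue"

end

theory Submission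
  imports Defs
begin

definition Emat :: "'a::finite \<Rightarrow> 'b::finite \<Rightarrow> real^'b^'a" where
  "Emat a b = (\<chi> i j. if i = a \<and> j = b then 1 else 0)"

definition suppm :: "('a::finite \<times> 'b::finite) set \<Rightarrow> (real^'b^'a) set" where
  "suppm K = {X. \<forall>a b. (a,b) \<notin> K \<longrightarrow> X$a$b = 0}"

lemma subspace_suppm: "subspace (suppm K)"
  unfolding subspace_def suppm_def by auto

lemma suppm_span: "suppm K \<subseteq> span ((\<lambda>(a,b). Emat a b) ` K)"
proof
  fix X assume X: "X \<in> suppm K"
  have eq: "X = (\<Sum>(a,b)\<in>K. X$a$b *\<^sub>R Emat a b)"
  proof (rule vec_eq_iff[THEN iffD2], intro allI, rule vec_eq_iff[THEN iffD2], intro allI)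
    fix i j
    have "(\<Sum>(a,b)\<in>K. X$a$b *\<^sub>R Emat a b) $ i $ j = (\<Sum>x\<in>K. if x = (i,j) then X$fst x$snd x else 0)"
      unfolding sum_component case_prod_beta by (rule sum.cong) (auto simp: Emat_def)
    also have "\<dots> = (if (i,j) \<in> K then X$i$j else 0)"
      by (subst sum.delta) auto
    also have "\<dots> = X$i$j" using X by (auto simp: suppm_def)
    finally show "X $ i $ j = (\<Sum>(a,b)\<in>K. X$a$b *\<^sub>R Emat a b) $ i $ j" by simp
  qed
  show "X \<in> span ((\<lambda>(a,b). Emat a b) ` K)"
    apply (subst eq)
    apply (rule span_sum)
    apply (clarsimp simp: case_prod_beta)
    apply (rule span_scale, rule span_base)
    by force
qed

lemma dim_suppm: "dim (suppm K) \<le> card K"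
proof -
  have "dim (suppm K) \<le> card ((\<lambda>(a,b). Emat a b) ` K)"
    by (rule dim_le_card[OF suppm_span]) simp
  also have "\<dots> \<le> card K" by (rule card_image_le) simp
  finally show ?thesis .
qed

lemma dim_le_inj:
  fixes h :: "'a::euclidean_space \<Rightarrow> 'b::euclidean_space"
  assumes "linear h" "subspace V" "\<And>x. x \<in> V \<Longrightarrow> h x = 0 \<Longrightarrow> x = 0" "h ` V \<subseteq> U"
  shows "dim V \<le> dim U"
proof -
  have "inj_on h V" using assms linear_injective_on_subspace_0 by blast
  then have "dim (h ` V) = dim V"
    using dim_image_eq[OF assms(1)] span_eq_iff assms(2) by metis
  moreover have "dim (h ` V) \<le> dim U" by (rule dim_subset[OF assms(4)])
  ultimately show ?thesis by simp
qed

lemma card_pairs: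
  fixes f :: "'a \<Rightarrow> nat"
  assumes inj: "inj f" and fin: "finite J"
  shows "2 * card {p\<in>J\<times>J. f (fst p) < f (snd p)} + card J = card J * card J"
    and "card {p\<in>J\<times>J. f (fst p) \<le> f (snd p)} = card {p\<in>J\<times>J. f (fst p) < f (snd p)} + card J"
proof -
  define Lt where "Lt = {p\<in>J\<times>J. f (fst p) < f (snd p)}"
  define Gt where "Gt = {p\<in>J\<times>J. f (snd p) < f (fst p)}"
  define Dg where "Dg = (\<lambda>a. (a,a)) ` J"
  have fins: "finite Lt" "finite Gt" "finite Dg" using fin
    by (auto simp: Lt_def Gt_def Dg_def intro: finite_subset[of _ "J\<times>J"])
  have "Gt = prod.swap ` Lt" by (auto simp: Lt_def Gt_def image_iff)
  then have cG: "card Gt = card Lt" by (simp add: card_image)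
  have cD: "card Dg = card J" unfolding Dg_def by (rule card_image) (simp add: inj_on_def)
  have inj': "f a = f b \<Longrightarrow> a = b" for a b using inj by (simp add: inj_eq)
  have all: "J \<times> J = Lt \<union> Gt \<union> Dg"
    by (auto simp: Lt_def Gt_def Dg_def image_iff; metis inj' linorder_neqE_nat)
  have "card (J\<times>J) = card Lt + card Gt + card Dg"
    unfolding all
    apply (subst card_Un_disjoint) using fins apply (auto simp: Lt_def Gt_def Dg_def)[3]
    apply (subst card_Un_disjoint) using fins by (auto simp: Lt_def Gt_def Dg_def)
  then show "2 * card {p\<in>J\<times>J. f (fst p) < f (snd p)} + card J = card J * card J"
    using cG cD by (simp add: Lt_def card_cartesian_product)
  have "{p\<in>J\<times>J. f (fst p) \<le> f (snd p)} = Lt \<union> Dg"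
    by (auto simp: Lt_def Dg_def image_iff dest: inj'; metis inj' le_neq_implies_less)
  then show "card {p\<in>J\<times>J. f (fst p) \<le> f (snd p)} = card {p\<in>J\<times>J. f (fst p) < f (snd p)} + card J"
  proof -
    assume e: "{p\<in>J\<times>J. f (fst p) \<le> f (snd p)} = Lt \<union> Dg"
    have "card (Lt \<union> Dg) = card Lt + card Dg"
      using fins by (intro card_Un_disjoint) (auto simp: Lt_def Dg_def)
    then show ?thesis using e cD by (simp add: Lt_def)
  qed
qed

lemma transpose_add': "transpose (X + Y) = transpose X + transpose (Y::real^'n^'m)"
  by (simp add: transpose_def vec_eq_iff)
lemma transpose_diff': "transpose (X - Y) = transpose X - transpose (Y::real^'n^'m)"
  by (simp add: transpose_def vec_eq_iff)
lemma transpose_uminus': "transpose (- X) = - transpose (X::real^'n^'m)"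
  by (simp add: transpose_def vec_eq_iff)
lemma transpose_zero': "transpose (0::real^'n^'m) = 0"
  by (simp add: transpose_def vec_eq_iff)

definition STm :: "'n::finite set \<Rightarrow> (real^'n^'n) set" where
  "STm J = {T. transpose T = T \<and> T \<in> suppm (J \<times> J)}"

definition SKm :: "(real^'n::finite^'n) set" where
  "SKm = {L. transpose L = - L}"

lemma subspace_STm: "subspace (STm J)"
  unfolding subspace_def STm_def
  using subspace_suppm[of "J \<times> J"] unfolding subspace_def
  by (simp add: transpose_add' transpose_scalar transpose_zero')

lemma subspace_SKm: "subspace SKm"
  unfolding subspace_def SKm_def 
  by (simp add: transpose_add' transpose_scalar transpose_zero')

lemma dim_STm: "2 * dim (STm (J::'n::finite set)) \<le> card J * card J + card J"
proof -
  obtain f :: "'n \<Rightarrow> nat" and n where "f ` UNIV = {i. i < n}" "inj_on f UNIV"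
    using finite_imp_inj_to_nat_seg[of "UNIV::'n set", OF finite] by blast
  then have inj: "inj f" by simp
  define up :: "real^'n^'n \<Rightarrow> real^'n^'n" where "up X = (\<chi> a b. if f a \<le> f b then X$a$b else 0)" for X
  have lin: "linear up" by (rule linearI) (auto simp: up_def vec_eq_iff)
  have z: "\<And>x a b. up x = 0 \<Longrightarrow> f a \<le> f b \<Longrightarrow> x$a$b = 0"
  proof -
    fix x :: "real^'n^'n" and a b assume "up x = 0" "f a \<le> f b"
    then have "up x $a$b = 0" by simp
    then show "x$a$b = 0" using \<open>f a \<le> f b\<close> by (simp add: up_def)
  qed
  have "dim (STm J) \<le> dim (suppm {p\<in>J\<times>J. f (fst p) \<le> f (snd p)})"
  proof (rule dim_le_inj[OF lin subspace_STm])
    fix x assume x: "x \<in> STm J" "up x = 0"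
    show "x = 0"
    proof (simp add: vec_eq_iff, intro allI)
      fix a b
      have "transpose x $a$b = x$a$b" using x(1) by (simp add: STm_def)
      then have t: "x$a$b = x$b$a" by (simp add: transpose_def)
      show "x$a$b = 0"
      proof (cases "f a \<le> f b")
        case True then show ?thesis using x(2) z by blast
      next
        case False then have "f b \<le> f a" by simp
        then show ?thesis using x(2) t z[of x b a] by simp
      qed
    qed
  next
    show "up ` STm J \<subseteq> suppm {p\<in>J\<times>J. f (fst p) \<le> f (snd p)}"
      by (auto simp: up_def STm_def suppm_def)
  qed
  also have "\<dots> \<le> card {p\<in>J\<times>J. f (fst p) \<le> f (snd p)}" by (rule dim_suppm)
  finally show ?thesis using card_pairs[OF inj, of J] by simp
qed

lemma dim_SKm: "2 * dim (SKm::(real^'n::finite^'n) set) + CARD('n) \<le> CARD('n) * CARD('n)"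
proof -
  obtain f :: "'n \<Rightarrow> nat" and n where "f ` UNIV = {i. i < n}" "inj_on f UNIV"
    using finite_imp_inj_to_nat_seg[of "UNIV::'n set", OF finite] by blast
  then have inj: "inj f" by simp
  define up :: "real^'n^'n \<Rightarrow> real^'n^'n" where "up X = (\<chi> a b. if f a < f b then X$a$b else 0)" for X
  have lin: "linear up" by (rule linearI) (auto simp: up_def vec_eq_iff)
  have z: "\<And>x a b. up x = 0 \<Longrightarrow> f a < f b \<Longrightarrow> x$a$b = 0"
  proof -
    fix x :: "real^'n^'n" and a b assume "up x = 0" "f a < f b"
    then have "up x $a$b = 0" by simp
    then show "x$a$b = 0" using \<open>f a < f b\<close> by (simp add: up_def)
  qed
  have "dim (SKm::(real^'n^'n) set) \<le> dim (suppm {p\<in>(UNIV::'n set)\<times>UNIV. f (fst p) < f (snd p)})"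
  proof (rule dim_le_inj[OF lin subspace_SKm])
    fix x :: "real^'n^'n" assume x: "x \<in> SKm" "up x = 0"
    show "x = 0"
    proof (simp add: vec_eq_iff, intro allI)
      fix a b
      have "transpose x $b$a = (- x)$b$a" using x(1) by (simp add: SKm_def)
      then have t: "x$a$b = - x$b$a" by (simp add: transpose_def)
      show "x$a$b = 0"
      proof (cases "f a < f b")
        case True then show ?thesis using x(2) z by blast
      next
        case False
        show ?thesis
        proof (cases "f a = f b")
          case True then have "a = b" using inj by (simp add: inj_eq)
          then show ?thesis using t by simp
        next
          case False
          then have "f b < f a" using \<open>\<not> f a < f b\<close> by simp
          then show ?thesis using x(2) t z[of x b a] by simp
        qed
      qed
    qed
  next
    show "up ` SKm \<subseteq> suppm {p\<in>(UNIV::'n set)\<times>UNIV. f (fst p) < f (snd p)}"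
      by (auto simp: up_def suppm_def)
  qed
  also have "\<dots> \<le> card {p\<in>(UNIV::'n set)\<times>UNIV. f (fst p) < f (snd p)}" by (rule dim_suppm)
  finally show ?thesis using card_pairs(1)[OF inj, of UNIV] by simp
qed

lemma negligible_image_lowdim_subspace:
  fixes g :: "'a::euclidean_space \<Rightarrow> 'b::euclidean_space"
  assumes D: "subspace D" and dD: "dim D < DIM('b)" and dg: "\<And>x. g differentiable (at x)"
  shows "negligible (g ` D)"
proof -
  have "dim D \<le> dim (UNIV::'b set)" using dD by simp
  then obtain D0 :: "'b set" where D0: "subspace D0" "dim D0 = dim D"
    by (metis choose_subspace_of_subspace)
  obtain f :: "'b \<Rightarrow> 'a" and h where f: "linear f" "f ` D0 = D"
    using isometries_subspaces[OF D0(1) D D0(2)] by metis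
  have neg0: "negligible D0" by (rule negligible_lowdim) (use D0 dD in simp)
  have "(g \<circ> f) differentiable_on D0"
    unfolding differentiable_on_def
    by (metis differentiable_at_withinI differentiable_chain_at dg f(1) linear_imp_differentiable)
  then have "negligible ((g \<circ> f) ` D0)"
    by (rule negligible_differentiable_image_negligible[OF order_refl neg0])
  moreover have "g ` D = (g \<circ> f) ` D0" by (metis f(2) image_comp)
  ultimately show ?thesis by simp
qed

lemma bilinear_mm: "bilinear ((**) :: real^'n::finite^'m::finite \<Rightarrow> real^'k::finite^'n \<Rightarrow> real^'k^'m)"
  unfolding bilinear_def
  by (auto intro!: linearI simp: vec_eq_iff matrix_matrix_mult_def sum.distrib algebra_simps sum_distrib_left)

lemma bb_mm: "bounded_bilinear ((**) :: real^'n::finite^'m::finite \<Rightarrow> real^'k::finite^'n \<Rightarrow> real^'k^'m)"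
  using bilinear_mm bilinear_conv_bounded_bilinear by blast

lemma differentiable_mm:
  fixes f :: "'a::real_normed_vector \<Rightarrow> real^'n::finite^'m::finite" and g :: "'a \<Rightarrow> real^'k::finite^'n"
  assumes "f differentiable (at x)" "g differentiable (at x)"
  shows "(\<lambda>x. f x ** g x) differentiable (at x)"
  using assms bounded_bilinear.FDERIV[OF bb_mm] unfolding differentiable_def by blast

lemma linear_transpose: "linear (transpose :: real^'n::finite^'m::finite \<Rightarrow> real^'m^'n)"
  by (rule linearI) (simp_all add: transpose_add' transpose_scalar)

definition gfun :: "real^'n::finite^'n \<Rightarrow> (real^'n^'n) \<times> (real^'n^'n) \<times> (real^'n^'n) \<times> (real^'n^'n) \<Rightarrow> real^'n^'n" where
  "gfun E x = transpose (E - fst x) ** fst (snd x) ** (E - fst x) + fst (snd (snd x)) + snd (snd (snd x))"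

lemma differentiable_gfun:
  fixes E :: "real^'n::finite^'n"
  shows "gfun E differentiable (at x)"
proof -
  have p1: "(\<lambda>x::(real^'n^'n) \<times> (real^'n^'n) \<times> (real^'n^'n) \<times> (real^'n^'n). fst x) differentiable (at x)" for x
    unfolding differentiable_def using has_derivative_fst[OF has_derivative_ident] by blast
  have p2: "(\<lambda>x::(real^'n^'n) \<times> (real^'n^'n) \<times> (real^'n^'n) \<times> (real^'n^'n). fst (snd x)) differentiable (at x)" for x
    unfolding differentiable_def using has_derivative_fst[OF has_derivative_snd[OF has_derivative_ident]] by blast
  have p3: "(\<lambda>x::(real^'n^'n) \<times> (real^'n^'n) \<times> (real^'n^'n) \<times> (real^'n^'n). fst (snd (snd x))) differentiable (at x)" for x
    unfolding differentiable_def using has_derivative_fst[OF has_derivative_snd[OF has_derivative_snd[OF has_derivative_ident]]] by blast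
  have p4: "(\<lambda>x::(real^'n^'n) \<times> (real^'n^'n) \<times> (real^'n^'n) \<times> (real^'n^'n). snd (snd (snd x))) differentiable (at x)" for x
    unfolding differentiable_def using has_derivative_snd[OF has_derivative_snd[OF has_derivative_snd[OF has_derivative_ident]]] by blast
  have l1: "(\<lambda>x. E - fst x) differentiable (at x)" for x :: "(real^'n^'n) \<times> (real^'n^'n) \<times> (real^'n^'n) \<times> (real^'n^'n)"
    by (intro differentiable_diff differentiable_const p1)
  have l2: "(\<lambda>x. transpose (E - fst x)) differentiable (at x)" for x :: "(real^'n^'n) \<times> (real^'n^'n) \<times> (real^'n^'n) \<times> (real^'n^'n)"
    using differentiable_chain_at[OF l1 linear_imp_differentiable[OF linear_transpose]] by (simp add: o_def)
  show ?thesis unfolding gfun_def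
    by (intro differentiable_add differentiable_mm l1 l2 p2 p3 p4)
qed

lemma frob_expand: "frob U V = (\<Sum>i\<in>UNIV. \<Sum>k\<in>UNIV. U$k$i * V$k$i)"
  by (simp add: frob_def trace_def matrix_matrix_mult_def transpose_def)

lemma frob_self_zero: "frob X X = 0 \<Longrightarrow> X = 0"
proof -
  assume "frob X X = 0"
  then have "(\<Sum>i\<in>UNIV. \<Sum>k\<in>UNIV. X$k$i * X$k$i) = 0" by (simp add: frob_expand)
  then have "\<forall>i. (\<Sum>k\<in>UNIV. X$k$i * X$k$i) = 0"
    by (subst (asm) sum_nonneg_eq_0_iff) (auto intro: sum_nonneg)
  then have "\<forall>i k. X$k$i * X$k$i = 0"
    by (subst (asm) sum_nonneg_eq_0_iff) auto
  then show "X = 0" by (simp add: vec_eq_iff)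
qed

lemma frob_Aadj: "frob (Aadj A \<nu>) X = (\<Sum>j\<in>UNIV. \<nu>$j * frob (A j) X)"
proof -
  have "frob (Aadj A \<nu>) X = (\<Sum>i\<in>UNIV. \<Sum>k\<in>UNIV. \<Sum>j\<in>UNIV. \<nu>$j * (A j $k$i * X$k$i))"
    by (simp add: frob_expand Aadj_def sum_component sum_distrib_right sum_distrib_left mult_ac)
  also have "\<dots> = (\<Sum>i\<in>UNIV. \<Sum>j\<in>UNIV. \<Sum>k\<in>UNIV. \<nu>$j * (A j $k$i * X$k$i))"
    by (rule sum.cong[OF refl], rule sum.swap)
  also have "\<dots> = (\<Sum>j\<in>UNIV. \<Sum>i\<in>UNIV. \<Sum>k\<in>UNIV. \<nu>$j * (A j $k$i * X$k$i))"
    by (rule sum.swap)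
  also have "\<dots> = (\<Sum>j\<in>UNIV. \<nu>$j * (\<Sum>i\<in>UNIV. \<Sum>k\<in>UNIV. A j $k$i * X$k$i))"
    by (simp add: sum_distrib_left)
  finally show ?thesis by (simp add: frob_expand)
qed

lemma linear_Aop: "linear (Aop A)"
  by (rule linearI) (simp_all add: Aop_def frob_expand vec_eq_iff sum.distrib algebra_simps sum_distrib_left)

lemma linear_Aadj: "linear (Aadj A)"
  by (rule linearI) (simp_all add: Aadj_def scaleR_add_left sum.distrib scaleR_sum_right)

lemma Aadj_sym:
  assumes symA: "\<And>i. A i \<in> symmat"
  shows "Aadj A \<nu> \<in> symmat"
proof -
  have "\<And>i a b. A i $a$b = A i $b$a"
  proof -
    fix i a b
    have "transpose (A i) $b$a = A i $b$a" using symA[of i] by (simp add: symmat_def)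
    then show "A i $a$b = A i $b$a" by (simp add: transpose_def)
  qed
  then show ?thesis
    by (simp add: symmat_def Aadj_def vec_eq_iff transpose_def sum_component)
qed

lemma dim_range_Aadj:
  assumes symA: "\<And>i. A i \<in> symmat"
  shows "dim (range (Aadj A)) \<le> rankA A"
  unfolding rankA_def
proof (rule dim_le_inj[OF linear_Aop])
  show "subspace (range (Aadj A))" by (rule linear_subspace_image[OF linear_Aadj subspace_UNIV])
  show "Aop A ` range (Aadj A) \<subseteq> Aop A ` symmat" using Aadj_sym[of A, OF symA] by blast
  fix x assume "x \<in> range (Aadj A)" "Aop A x = 0"
  then obtain \<nu> where x: "x = Aadj A \<nu>" by blast
  have "frob x x = (\<Sum>j\<in>UNIV. \<nu>$j * frob (A j) x)" using x frob_Aadj by simp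
  also have "\<dots> = 0" using \<open>Aop A x = 0\<close> by (simp add: Aop_def vec_eq_iff)
  finally show "x = 0" by (rule frob_self_zero)
qed

lemma partA:
  fixes S :: "real^'n::finite^'n" and Y :: "real^'p::finite^'n"
  assumes SY: "S ** Y = 0" and rk: "rank Y = CARD('p)"
  shows "\<exists>I v. card I = CARD('p) \<and> (\<forall>b\<in>I. S *v v b = 0) \<and>
           (\<forall>b\<in>I. \<forall>a\<in>I. v b $ a = (if a = b then 1 else 0))"
proof -
  have rowY: "row i Y = Y $ i" for i by (simp add: row_def vec_eq_iff)
  have "dim (rows Y) = DIM(real^'p)" using rk by (simp add: row_rank_def)
  then have spanR: "span (rows Y) = UNIV" using dim_eq_span[of "rows Y" UNIV] by simp
  obtain B where B: "B \<subseteq> rows Y" "independent B" "rows Y \<subseteq> span B"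
    using maximal_independent_subset by blast
  have spanB: "span B = UNIV" using B spanR by (metis span_eq span_span top.extremum_uniqueI span_mono)
  have cB: "card B = CARD('p)"
    using dim_span_eq_card_independent[OF B(2)] spanB by simp
  define idx where "idx b = (SOME i. row i Y = b)" for b
  have idx: "row (idx b) Y = b" if "b \<in> B" for b
    using B(1) that unfolding idx_def rows_def by (auto intro: someI)
  have injidx: "inj_on idx B" by (metis idx inj_onI)
  define I where "I = idx ` B"
  have cI: "card I = CARD('p)" using card_image[OF injidx] cB by (simp add: I_def)
  define \<psi> where "\<psi> x = (\<chi> k. if k \<in> I then (Y *v x) $ k else 0)" for x
  have lin: "linear \<psi>" by (rule linearI) (auto simp: \<psi>_def vec_eq_iff matrix_vector_mult_def sum.distrib sum_distrib_left algebra_simps)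
  have inj: "x = 0" if "\<psi> x = 0" for x
  proof -
    have "orthogonal x b" if "b \<in> B" for b
    proof -
      have "idx b \<in> I" using that by (simp add: I_def)
      then have "(Y *v x) $ idx b = 0" using \<open>\<psi> x = 0\<close> by (simp add: \<psi>_def vec_eq_iff) (metis)
      then show ?thesis using idx[OF that] by (simp add: matrix_vector_mul_component orthogonal_def inner_commute rowY)
    qed
    then have "orthogonal x x" using orthogonal_to_span[of x B x] spanB by auto
    then show "x = 0" by (simp add: orthogonal_def)
  qed
  define Sub where "Sub = {v::real^'n. \<forall>i. i \<notin> I \<longrightarrow> v$i = 0}"
  have "vec.dim Sub = card I" unfolding Sub_def by (rule dim_substandard_cart)
  then have dSub: "dim Sub = card I" by (simp add: dim_vec_eq)
  have injon: "inj_on \<psi> (span UNIV)" by (subst linear_injective_on_subspace_0[OF lin subspace_span]) (use inj in blast)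
  have drange: "dim (range \<psi>) = CARD('p)"
    using dim_image_eq[OF lin injon] by simp
  have rsub: "range \<psi> \<subseteq> Sub" by (auto simp: \<psi>_def Sub_def)
  have subSub: "subspace Sub" unfolding subspace_def Sub_def by auto
  have "span (range \<psi>) = span Sub" by (rule dim_eq_span[OF rsub]) (simp add: dSub drange cI)
  then have rEq: "range \<psi> = Sub"
    using linear_subspace_image[OF lin subspace_UNIV] subSub by (metis span_eq_iff)
  have "\<exists>x. \<psi> x = axis b 1" if "b \<in> I" for b
  proof -
    have "axis b 1 \<in> Sub" using that by (simp add: Sub_def axis_def)
    then show ?thesis using rEq by (metis rangeE)
  qed
  then obtain xx where xx: "\<And>b. b \<in> I \<Longrightarrow> \<psi> (xx b) = axis b 1" by metis
  define v where "v b = Y *v xx b" for b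
  have "\<forall>b\<in>I. S *v v b = 0" by (simp add: v_def matrix_vector_mul_assoc SY)
  moreover have "\<forall>b\<in>I. \<forall>a\<in>I. v b $ a = (if a = b then 1 else 0)"
  proof (intro ballI)
    fix a b assume ab: "b \<in> I" "a \<in> I"
    have "\<psi> (xx b) $ a = axis b 1 $ a" using xx[OF ab(1)] by simp
    then show "v b $ a = (if a = b then 1 else 0)" using ab by (simp add: \<psi>_def v_def axis_def)
  qed
  ultimately show ?thesis using cI by blast
qed

definition EJ :: "'n::finite set \<Rightarrow> real^'n^'n" where
  "EJ I = (\<chi> a b. if a = b \<and> a \<notin> I then 1 else 0)"

lemma EJ_left: "(EJ I ** X) $a$b = (if a \<notin> I then X$a$b else 0)"
proof -
  have "(EJ I ** X) $a$b = (\<Sum>c\<in>UNIV. EJ I $a$c * X$c$b)"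
    by (simp add: matrix_matrix_mult_def)
  also have "\<dots> = (\<Sum>c\<in>UNIV. if c = a then (if a \<notin> I then X$c$b else 0) else 0)"
    by (rule sum.cong) (auto simp: EJ_def)
  also have "\<dots> = (if a \<notin> I then X$a$b else 0)" by (subst sum.delta) auto
  finally show ?thesis .
qed

lemma EJ_right: "(X ** EJ I) $a$b = (if b \<notin> I then X$a$b else 0)"
proof -
  have "(X ** EJ I) $a$b = (\<Sum>c\<in>UNIV. X$a$c * EJ I $c$b)"
    by (simp add: matrix_matrix_mult_def)
  also have "\<dots> = (\<Sum>c\<in>UNIV. if c = b then (if b \<notin> I then X$a$c else 0) else 0)"
    by (rule sum.cong) (auto simp: EJ_def)
  also have "\<dots> = (if b \<notin> I then X$a$b else 0)" by (subst sum.delta) auto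
  finally show ?thesis .
qed

lemma transpose_EJ: "transpose (EJ I) = EJ I"
  by (simp add: EJ_def transpose_def vec_eq_iff) 

lemma partB:
  fixes S :: "real^'n::finite^'n"
  assumes symS: "transpose S = S"
    and Sv: "\<forall>b\<in>I. S *v v b = 0"
    and vI: "\<forall>b\<in>I. \<forall>a\<in>I. v b $ a = (if a = b then 1 else 0)"
  shows "\<exists>Z T. Z \<in> suppm ((- I) \<times> I) \<and> T \<in> STm (-I) \<and> S = transpose (EJ I - Z) ** T ** (EJ I - Z)"
proof -
  define Kz :: "real^'n^'n" where "Kz = (\<chi> a b. if b \<in> I then v b $ a else 0)"
  define Z :: "real^'n^'n" where "Z = (\<chi> a b. if a \<notin> I \<and> b \<in> I then v b $ a else 0)"
  define R where "R = EJ I - Z"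
  define T where "T = EJ I ** S ** EJ I"
  have SK: "S ** Kz = 0"
  proof (simp add: vec_eq_iff, intro allI)
    fix a b
    show "(S ** Kz) $ a $ b = 0"
    proof (cases "b \<in> I")
      case True
      have "(S ** Kz) $ a $ b = (S *v v b) $ a"
        using True by (simp add: matrix_matrix_mult_def matrix_vector_mult_def Kz_def)
      then show ?thesis using Sv True by simp
    next
      case False then show ?thesis by (simp add: matrix_matrix_mult_def Kz_def)
    qed
  qed
  have Id: "mat 1 = Kz + EJ I ** R"
  proof (simp add: vec_eq_iff, intro allI)
    fix a b
    have e: "(EJ I ** R) $ a $ b = (if a \<notin> I then R$a$b else 0)" by (rule EJ_left)
    show "mat 1 $ a $ b = Kz $ a $ b + (EJ I ** R) $ a $ b"
      unfolding e using vI by (cases "a \<in> I"; cases "b \<in> I")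
         (auto simp: mat_def Kz_def R_def Z_def EJ_def)
  qed
  have S1: "S = (S ** EJ I) ** R"
  proof -
    have "S = S ** mat 1" by simp
    also have "\<dots> = S ** Kz + S ** (EJ I ** R)" by (simp add: Id matrix_add_ldistrib)
    also have "\<dots> = (S ** EJ I) ** R" by (simp add: SK matrix_mul_assoc)
    finally show ?thesis .
  qed
  have S2: "S = transpose R ** (EJ I ** S)"
  proof -
    have "S = transpose S" using symS by simp
    also have "\<dots> = transpose R ** (EJ I ** S)"
      by (subst S1) (simp add: matrix_transpose_mul transpose_EJ symS)
    finally show ?thesis .
  qed
  have "S = transpose R ** T ** R"
  proof -
    have "S = ((transpose R ** (EJ I ** S)) ** EJ I) ** R" using S1 S2 by metis
    then show ?thesis by (simp add: T_def matrix_mul_assoc)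
  qed
  moreover have "Z \<in> suppm ((- I) \<times> I)" by (auto simp: suppm_def Z_def)
  moreover have "T \<in> STm (-I)"
    unfolding STm_def suppm_def
  proof (intro CollectI conjI allI impI)
    show "transpose T = T" by (simp add: T_def matrix_transpose_mul transpose_EJ symS matrix_mul_assoc)
    fix a b assume "(a, b) \<notin> (- I) \<times> (- I)"
    then show "T $ a $ b = 0" by (auto simp: T_def EJ_left EJ_right)
  qed
  ultimately show ?thesis unfolding R_def by blast
qed

theorem lemma3:
  fixes A :: "'m::finite \<Rightarrow> real^'n::finite^'n"
    and b :: "real^'m"
  assumes symA: "\<And>i. A i \<in> symmat"
    and prank: "CARD('p::finite) * (CARD('p) + 1) > 2 * rankA A"
    and ass1: "assumption1 A b TYPE('p)"
  shows "\<exists>N. sym_null N \<and>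
           (\<forall>C\<in>symmat - N. \<forall>Y::real^'p^'n. critical A b C Y \<longrightarrow> rank Y < CARD('p))"
proof -
  define N where "N = {C \<in> symmat. \<exists>Y::real^'p^'n. rank Y = CARD('p) \<and> Smat A C Y ** Y = 0}"
  have part2: "\<forall>C\<in>symmat - N. \<forall>Y::real^'p^'n. critical A b C Y \<longrightarrow> rank Y < CARD('p)"
  proof (intro ballI allI impI)
    fix C and Y :: "real^'p^'n" assume C: "C \<in> symmat - N" and cr: "critical A b C Y"
    have "rank Y \<le> CARD('p)" using rank_bound[of Y] by simp
    moreover have "rank Y \<noteq> CARD('p)" using C cr by (auto simp: N_def critical_def)
    ultimately show "rank Y < CARD('p)" by simp
  qed
  define W where "W = range (Aadj A)"
  define D where "D I = suppm ((- I) \<times> I) \<times> STm (- I) \<times> W \<times> (SKm::(real^'n^'n) set)" for I :: "'n set"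
  define G where "G I = gfun (EJ I) ` D I" for I :: "'n set"
  define P where "P = {X::real^'n^'n. (1/2) *\<^sub>R (X + transpose X) \<in> N}"
  have subW: "subspace W" unfolding W_def by (rule linear_subspace_image[OF linear_Aadj subspace_UNIV])
  have PG: "P \<subseteq> \<Union> (G ` {I. card I = CARD('p)})"
  proof
    fix X assume "X \<in> P"
    define C where "C = (1/2) *\<^sub>R (X + transpose X)"
    have "C \<in> N" using \<open>X \<in> P\<close> by (simp add: P_def C_def)
    then obtain Y :: "real^'p^'n" where C: "C \<in> symmat" and rk: "rank Y = CARD('p)" and SY: "Smat A C Y ** Y = 0"
      by (auto simp: N_def)
    define S where "S = Smat A C Y"
    define w where "w = Aadj A (mu A C Y)"
    define L where "L = (1/2) *\<^sub>R (X - transpose X)"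
    have symS: "transpose S = S"
      using C Aadj_sym[of A, OF symA, of "mu A C Y"]
      by (simp add: S_def Smat_def symmat_def transpose_diff')
    obtain I v where I: "card I = CARD('p)" and Sv: "\<forall>b\<in>I. S *v v b = 0"
       and vI: "\<forall>b\<in>I. \<forall>a\<in>I. v b $ a = (if a = b then 1 else 0)"
      using partA[OF SY[folded S_def] rk] by blast
    obtain Z T where Z: "Z \<in> suppm ((- I) \<times> I)" and T: "T \<in> STm (- I)"
      and ST: "S = transpose (EJ I - Z) ** T ** (EJ I - Z)"
      using partB[OF symS Sv vI] by blast
    have wW: "w \<in> W" by (simp add: W_def w_def)
    have LK: "L \<in> SKm"
      by (simp add: SKm_def L_def transpose_scalar transpose_diff' scaleR_diff_right)
    have "X = S + w + L"
      by (simp add: S_def Smat_def w_def L_def C_def vec_eq_iff transpose_def field_simps)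
    then have "X = gfun (EJ I) (Z, T, w, L)" by (simp add: gfun_def ST)
    moreover have "(Z, T, w, L) \<in> D I" using Z T wW LK by (simp add: D_def)
    ultimately have "X \<in> G I" by (simp add: G_def)
    then show "X \<in> \<Union> (G ` {I. card I = CARD('p)})" using I by blast
  qed
  have negG: "negligible (G I)" if I: "card I = CARD('p)" for I :: "'n set"
  proof -
    have subD: "subspace (D I)" unfolding D_def
      by (intro subspace_Times subspace_suppm subspace_STm subW subspace_SKm)
    have dD: "dim (D I) = dim (suppm ((- I) \<times> I)) + dim (STm (- I)) + dim W + dim (SKm::(real^'n^'n) set)"
      unfolding D_def
      by (simp add: dim_Times subspace_Times subspace_suppm subspace_STm subW subspace_SKm)
    define n where "n = CARD('n)"
    define p where "p = CARD('p)"
    define r where "r = card (- I)"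
    have pn: "p \<le> n" using I card_mono[of UNIV I] by (simp add: p_def n_def)
    have "card (- I) = card (UNIV::'n set) - card I" by (simp add: Compl_eq_Diff_UNIV card_Diff_subset)
    then have rdef: "r = n - p" using I by (simp add: r_def n_def p_def)
    have nrp: "n = r + p" using pn rdef by simp
    have d1: "dim (suppm ((- I) \<times> I)) \<le> r * p"
      using dim_suppm[of "(- I) \<times> I"] I by (simp add: card_cartesian_product r_def p_def)
    have d2: "2 * dim (STm (- I)) \<le> r * r + r" using dim_STm[of "- I"] by (simp add: r_def)
    have d3: "dim W \<le> rankA A" unfolding W_def by (rule dim_range_Aadj[OF symA])
    have d4: "2 * dim (SKm::(real^'n^'n) set) + n \<le> n * n" using dim_SKm by (simp add: n_def)
    have pr: "2 * rankA A < p * p + p" using prank by (simp add: p_def algebra_simps)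
    have nn: "n * n = r * r + 2 * (r * p) + p * p" by (simp add: nrp algebra_simps)
    have "dim (D I) < n * n" unfolding dD using d1 d2 d3 d4 pr nn nrp by linarith
    then have "dim (D I) < DIM(real^'n^'n)" by (simp add: n_def)
    then show ?thesis unfolding G_def
      by (rule negligible_image_lowdim_subspace[OF subD _ differentiable_gfun])
  qed
  have "negligible (\<Union> (G ` {I. card I = CARD('p)}))"
    by (rule negligible_Union) (auto intro: negG)
  then have "negligible P" using PG negligible_subset by blast
  then have "sym_null N"
    unfolding sym_null_def using negligible_iff_null_sets by (auto simp: P_def N_def)
  with part2 show ?thesis by blast
qed

end
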